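(* Let $(E,p,X)$ be an étalé space with $X$ a Boolean space. Let $X^{\ast}$ be the Boolean algebra of compact-open subsets of $X$ (under inclusion) and $E^{\ast}$ the set of compact-open local sections of $E$. Let $\widetilde p\colon E^{\ast}\to X^{\ast}$ be $C\mapsto p(C)$, and for compact-open $A\supseteq B$ in $X$ and $C\in E^{\ast}$ with $p(C)=A$ define $C|^A_B=C\cap p^{-1}(B)$. Then $\widetilde p\colon E^{\ast}\to X^{\ast}$ is a Boolean set.
   Context: A Boolean space is a Hausdorff space with a basis of compact-open sets. An étalé space $(E,p,X)$: topological spaces with a surjective local homeomorphism $p\colon E\to X$. A (open) local section is an open $A\subseteq E$ with $p|_A$ injective. Convention: a "Boolean algebra" means a generalized Boolean algebra (relatively complemented distributive lattice with $0$). Presheaf of sets over a meet semilattice $E$: pairwise disjoint sets $X_e$, restriction maps $x\mapsto x|^e_f$ for $e\ge f$ with $|^e_e=\mathrm{id}$ and $(x|^e_f)|^f_g=x|^e_g$; $p(x)=e$ iff $x\in X_e$; global support: all $X_e\neq\emptyset$. Order: $x\le y$ iff $p(x)\le p(y)$ and $x=y|^{p(y)}_{p(x)}$. Compatibility $x\sim y$: $x\wedge y$ exists and $p(x\wedge y)=p(x)\wedge p(y)$. A Boolean set is a presheaf with global support over a Boolean algebra such that the order has least element $0$, compatible pairs have joins, and $p(x)=0\Rightarrow x=0$. *)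

theory Defs
  imports "HOL-Analysis.Analysis"
begin

definition boolean_space :: "'a topology \<Rightarrow> bool" where
  "boolean_space X \<longleftrightarrow> Hausdorff_space X \<and>
     (\<forall>U x. openin X U \<and> x \<in> U \<longrightarrow>
        (\<exists>V. openin X V \<and> compactin X V \<and> x \<in> V \<and> V \<subseteq> U))"

definition local_homeomorphism_map :: "'a topology \<Rightarrow> 'b topology \<Rightarrow> ('a \<Rightarrow> 'b) \<Rightarrow> bool" where
  "local_homeomorphism_map E X p \<longleftrightarrow> continuous_map E X p \<and>
     (\<forall>x\<in>topspace E. \<exists>U. openin E U \<and> x \<in> U \<and> openin X (p ` U) \<and>
        homeomorphic_map (subtopology E U) (subtopology X (p ` U)) p)"

definition etale_space :: "'a topology \<Rightarrow> ('a \<Rightarrow> 'b) \<Rightarrow> 'b topology \<Rightarrow> bool" where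
  "etale_space E p X \<longleftrightarrow> local_homeomorphism_map E X p \<and> p ` topspace E = topspace X"

definition local_section :: "'a topology \<Rightarrow> ('a \<Rightarrow> 'b) \<Rightarrow> 'a set \<Rightarrow> bool" where
  "local_section E p A \<longleftrightarrow> openin E A \<and> inj_on p A"

definition compact_open :: "'a topology \<Rightarrow> 'a set \<Rightarrow> bool" where
  "compact_open X A \<longleftrightarrow> openin X A \<and> compactin X A"

definition is_inf :: "('a \<Rightarrow> 'a \<Rightarrow> bool) \<Rightarrow> 'a set \<Rightarrow> 'a \<Rightarrow> 'a \<Rightarrow> 'a \<Rightarrow> bool" where
  "is_inf le A a b m \<longleftrightarrow> m \<in> A \<and> le m a \<and> le m b \<and> (\<forall>z\<in>A. le z a \<and> le z b \<longrightarrow> le z m)"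

definition is_sup :: "('a \<Rightarrow> 'a \<Rightarrow> bool) \<Rightarrow> 'a set \<Rightarrow> 'a \<Rightarrow> 'a \<Rightarrow> 'a \<Rightarrow> bool" where
  "is_sup le A a b j \<longleftrightarrow> j \<in> A \<and> le a j \<and> le b j \<and> (\<forall>z\<in>A. le a z \<and> le b z \<longrightarrow> le j z)"

definition binf :: "('a \<Rightarrow> 'a \<Rightarrow> bool) \<Rightarrow> 'a set \<Rightarrow> 'a \<Rightarrow> 'a \<Rightarrow> 'a" where
  "binf le A a b = (THE m. is_inf le A a b m)"

definition bsup :: "('a \<Rightarrow> 'a \<Rightarrow> bool) \<Rightarrow> 'a set \<Rightarrow> 'a \<Rightarrow> 'a \<Rightarrow> 'a" where
  "bsup le A a b = (THE j. is_sup le A a b j)"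

definition bbot :: "('a \<Rightarrow> 'a \<Rightarrow> bool) \<Rightarrow> 'a set \<Rightarrow> 'a" where
  "bbot le A = (THE z. z \<in> A \<and> (\<forall>a\<in>A. le z a))"

definition partial_order_on_set :: "('a \<Rightarrow> 'a \<Rightarrow> bool) \<Rightarrow> 'a set \<Rightarrow> bool" where
  "partial_order_on_set le A \<longleftrightarrow>
     (\<forall>a\<in>A. le a a) \<and>
     (\<forall>a\<in>A. \<forall>b\<in>A. le a b \<and> le b a \<longrightarrow> a = b) \<and>
     (\<forall>a\<in>A. \<forall>b\<in>A. \<forall>c\<in>A. le a b \<and> le b c \<longrightarrow> le a c)"

definition meet_semilattice :: "('a \<Rightarrow> 'a \<Rightarrow> bool) \<Rightarrow> 'a set \<Rightarrow> bool" where
  "meet_semilattice le A \<longleftrightarrow> partial_order_on_set le A \<and>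
     (\<forall>a\<in>A. \<forall>b\<in>A. \<exists>m. is_inf le A a b m)"

definition gen_boolean_algebra :: "('a \<Rightarrow> 'a \<Rightarrow> bool) \<Rightarrow> 'a set \<Rightarrow> bool" where
  "gen_boolean_algebra le A \<longleftrightarrow> partial_order_on_set le A \<and>
     (\<forall>a\<in>A. \<forall>b\<in>A. \<exists>m. is_inf le A a b m) \<and>
     (\<forall>a\<in>A. \<forall>b\<in>A. \<exists>j. is_sup le A a b j) \<and>
     (\<exists>z\<in>A. \<forall>a\<in>A. le z a) \<and>
     (\<forall>a\<in>A. \<forall>b\<in>A. \<forall>c\<in>A.
        binf le A a (bsup le A b c) = bsup le A (binf le A a b) (binf le A a c)) \<and>
     (\<forall>a\<in>A. \<forall>x\<in>A. \<forall>b\<in>A. le a x \<and> le x b \<longrightarrow>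
        (\<exists>y\<in>A. binf le A x y = a \<and> bsup le A x y = b))"

text \<open>A presheaf of sets over the meet semilattice (B, le) is given by the total set S
  (the disjoint union of the fibres X_e = {x \<in> S. p x = e}), the projection p and the
  restriction maps res e f :: X_e \<Rightarrow> X_f for e \<ge> f.\<close>
definition presheaf :: "('b \<Rightarrow> 'b \<Rightarrow> bool) \<Rightarrow> 'b set \<Rightarrow> 'a set \<Rightarrow> ('a \<Rightarrow> 'b)
     \<Rightarrow> ('b \<Rightarrow> 'b \<Rightarrow> 'a \<Rightarrow> 'a) \<Rightarrow> bool" where
  "presheaf le B S p res \<longleftrightarrow> meet_semilattice le B \<and>
     (\<forall>x\<in>S. p x \<in> B) \<and>
     (\<forall>e\<in>B. \<forall>f\<in>B. \<forall>x\<in>S. le f e \<and> p x = e \<longrightarrow> res e f x \<in> S \<and> p (res e f x) = f) \<and>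
     (\<forall>x\<in>S. res (p x) (p x) x = x) \<and>
     (\<forall>e\<in>B. \<forall>f\<in>B. \<forall>g\<in>B. \<forall>x\<in>S. le g f \<and> le f e \<and> p x = e \<longrightarrow>
        res f g (res e f x) = res e g x)"

definition global_support :: "'b set \<Rightarrow> 'a set \<Rightarrow> ('a \<Rightarrow> 'b) \<Rightarrow> bool" where
  "global_support B S p \<longleftrightarrow> (\<forall>e\<in>B. \<exists>x\<in>S. p x = e)"

definition presheaf_le :: "('b \<Rightarrow> 'b \<Rightarrow> bool) \<Rightarrow> ('a \<Rightarrow> 'b) \<Rightarrow> ('b \<Rightarrow> 'b \<Rightarrow> 'a \<Rightarrow> 'a)
     \<Rightarrow> 'a \<Rightarrow> 'a \<Rightarrow> bool" where
  "presheaf_le le p res x y \<longleftrightarrow> le (p x) (p y) \<and> x = res (p y) (p x) y"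

definition presheaf_compatible :: "('b \<Rightarrow> 'b \<Rightarrow> bool) \<Rightarrow> 'b set \<Rightarrow> 'a set \<Rightarrow> ('a \<Rightarrow> 'b)
     \<Rightarrow> ('b \<Rightarrow> 'b \<Rightarrow> 'a \<Rightarrow> 'a) \<Rightarrow> 'a \<Rightarrow> 'a \<Rightarrow> bool" where
  "presheaf_compatible le B S p res x y \<longleftrightarrow>
     (\<exists>m. is_inf (presheaf_le le p res) S x y m \<and> p m = binf le B (p x) (p y))"

definition boolean_set :: "('b \<Rightarrow> 'b \<Rightarrow> bool) \<Rightarrow> 'b set \<Rightarrow> 'a set \<Rightarrow> ('a \<Rightarrow> 'b)
     \<Rightarrow> ('b \<Rightarrow> 'b \<Rightarrow> 'a \<Rightarrow> 'a) \<Rightarrow> bool" where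
  "boolean_set le B S p res \<longleftrightarrow>
     gen_boolean_algebra le B \<and> presheaf le B S p res \<and> global_support B S p \<and>
     (\<exists>z\<in>S. (\<forall>x\<in>S. presheaf_le le p res z x) \<and>
            (\<forall>x\<in>S. p x = bbot le B \<longrightarrow> x = z)) \<and>
     (\<forall>x\<in>S. \<forall>y\<in>S. presheaf_compatible le B S p res x y \<longrightarrow>
        (\<exists>j. is_sup (presheaf_le le p res) S x y j))"

end

theory Submission
  imports Defs
begin

lemma binf_eqI:
  assumes "\<And>a b. a \<in> B \<Longrightarrow> b \<in> B \<Longrightarrow> a \<inter> b \<in> B" "a \<in> B" "b \<in> B"
  shows "binf (\<subseteq>) B a b = a \<inter> b"
  unfolding binf_def
proof (rule the_equality)
  have ab: "a \<inter> b \<in> B" using assms by blast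
  then show "is_inf (\<subseteq>) B a b (a \<inter> b)" unfolding is_inf_def by blast
  fix m assume m: "is_inf (\<subseteq>) B a b m"
  then have "m \<subseteq> a \<inter> b" unfolding is_inf_def by blast
  moreover have "a \<inter> b \<subseteq> m" using m ab unfolding is_inf_def by blast
  ultimately show "m = a \<inter> b" by (rule subset_antisym)
qed

lemma bsup_eqI:
  assumes "\<And>a b. a \<in> B \<Longrightarrow> b \<in> B \<Longrightarrow> a \<union> b \<in> B" "a \<in> B" "b \<in> B"
  shows "bsup (\<subseteq>) B a b = a \<union> b"
  unfolding bsup_def
proof (rule the_equality)
  have ab: "a \<union> b \<in> B" using assms by blast
  then show "is_sup (\<subseteq>) B a b (a \<union> b)" unfolding is_sup_def by blast
  fix m assume m: "is_sup (\<subseteq>) B a b m"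
  then have "a \<union> b \<subseteq> m" unfolding is_sup_def by blast
  moreover have "m \<subseteq> a \<union> b" using m ab unfolding is_sup_def by blast
  ultimately show "m = a \<union> b" by (rule subset_antisym[symmetric])
qed

lemma bbot_eqI:
  assumes "{} \<in> B"
  shows "bbot (\<subseteq>) B = {}"
  unfolding bbot_def
proof (rule the_equality)
  show "{} \<in> B \<and> (\<forall>a\<in>B. {} \<subseteq> a)" using assms by blast
  fix z assume "z \<in> B \<and> (\<forall>a\<in>B. z \<subseteq> a)"
  then show "z = {}" using assms by blast
qed

lemma etale_open_image:
  assumes "etale_space E p X" "openin E C"
  shows "openin X (p ` C)"
proof (subst openin_subopen, intro ballI)
  fix y assume "y \<in> p ` C"
  then obtain e where e: "e \<in> C" "y = p e" by auto
  have "e \<in> topspace E" using e assms(2) openin_subset by blast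
  then obtain U where U: "openin E U" "e \<in> U" "openin X (p ` U)"
     "homeomorphic_map (subtopology E U) (subtopology X (p ` U)) p"
    using assms(1) unfolding etale_space_def local_homeomorphism_map_def by blast
  have sub: "C \<inter> U \<subseteq> topspace (subtopology E U)"
    using assms(2) openin_subset by fastforce
  have "openin (subtopology E U) (C \<inter> U)"
    using assms(2) by (auto simp: openin_subtopology)
  then have "openin (subtopology X (p ` U)) (p ` (C \<inter> U))"
    using homeomorphic_map_openness[OF U(4) sub] by simp
  then have "openin X (p ` (C \<inter> U))"
    using U(3) openin_open_subtopology by blast
  then show "\<exists>T. openin X T \<and> y \<in> T \<and> T \<subseteq> p ` C"
    using e U(2) by blast
qed

lemma restr_in:
  assumes hX: "Hausdorff_space X" and cont: "continuous_map E X p"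
    and C: "compact_open E C \<and> local_section E p C" and D: "compact_open X D"
  shows "compact_open E (C \<inter> (p -` D \<inter> topspace E)) \<and> local_section E p (C \<inter> (p -` D \<inter> topspace E))"
proof -
  have eq: "p -` D \<inter> topspace E = {x \<in> topspace E. p x \<in> D}" by auto
  have o: "openin E {x \<in> topspace E. p x \<in> D}"
    using D cont openin_continuous_map_preimage unfolding compact_open_def by blast
  have c: "closedin E {x \<in> topspace E. p x \<in> D}"
    using D cont hX closedin_continuous_map_preimage compactin_imp_closedin unfolding compact_open_def by blast
  have "compactin E ({x \<in> topspace E. p x \<in> D} \<inter> C)"
    using closed_Int_compactin[OF c] C unfolding compact_open_def by blast
  then show ?thesis using o C unfolding compact_open_def local_section_def eq
    by (auto simp: Int_commute intro: inj_on_subset)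
qed

lemma restr_img:
  assumes "C \<subseteq> topspace E" "D \<subseteq> p ` C"
  shows "p ` (C \<inter> (p -` D \<inter> topspace E)) = D"
  using assms by (auto, fastforce)

lemma has_sec_local:
  assumes et: "etale_space E p X" and bX: "boolean_space X"
    and A: "compact_open X A" and x: "x \<in> A"
  shows "\<exists>V. compact_open X V \<and> x \<in> V \<and> V \<subseteq> A \<and>
     (\<exists>C. compact_open E C \<and> local_section E p C \<and> p ` C = V)"
proof -
  have cont: "continuous_map E X p"
    using et unfolding etale_space_def local_homeomorphism_map_def by blast
  have "x \<in> topspace X" using A x openin_subset unfolding compact_open_def by blast
  then obtain e where e: "e \<in> topspace E" "p e = x"
    using et unfolding etale_space_def by force
  then obtain U where U: "openin E U" "e \<in> U" "openin X (p ` U)"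
     "homeomorphic_map (subtopology E U) (subtopology X (p ` U)) p"
    using et unfolding etale_space_def local_homeomorphism_map_def by blast
  have "openin X (p ` U \<inter> A)" "x \<in> p ` U \<inter> A"
    using U A e x unfolding compact_open_def by auto
  then obtain V where V: "openin X V" "compactin X V" "x \<in> V" "V \<subseteq> p ` U \<inter> A"
    using bX unfolding boolean_space_def by blast
  define W where "W = U \<inter> (p -` V \<inter> topspace E)"
  have UE: "U \<subseteq> topspace E" using U(1) openin_subset by blast
  have pW: "p ` W = V" using V(4) UE unfolding W_def by (auto, fastforce)
  have Wsub: "W \<subseteq> topspace (subtopology E U)" unfolding W_def by auto
  have "compactin (subtopology X (p ` U)) (p ` W)"
    using pW V by (auto simp: compactin_subtopology)
  then have "compactin (subtopology E U) W"
    using homeomorphic_map_compactness[OF U(4) Wsub] by simp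
  then have cW: "compactin E W" by (simp add: compactin_subtopology)
  have "openin E {x \<in> topspace E. p x \<in> V}"
    using V cont openin_continuous_map_preimage by blast
  moreover have "W = U \<inter> {x \<in> topspace E. p x \<in> V}" unfolding W_def by auto
  ultimately have oW: "openin E W" using U(1) by auto
  have "inj_on p (topspace E \<inter> U)"
    using homeomorphic_imp_injective_map[OF U(4)] by simp
  then have "inj_on p W" by (rule inj_on_subset) (auto simp: W_def)
  then show ?thesis using cW oW pW V
    unfolding compact_open_def local_section_def by blast
qed

lemma sec_union:
  assumes hX: "Hausdorff_space X" and cont: "continuous_map E X p"
    and A1: "compact_open X A1" and A2: "compact_open X A2"
    and C1: "compact_open E C1 \<and> local_section E p C1" "p ` C1 = A1"
    and C2: "compact_open E C2 \<and> local_section E p C2" "p ` C2 = A2"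
  shows "\<exists>C. compact_open E C \<and> local_section E p C \<and> p ` C = A1 \<union> A2"
proof -
  have "closedin X A1" using hX A1 compactin_imp_closedin unfolding compact_open_def by blast
  moreover have "closedin X (topspace X - A1)"
    using A1 unfolding compact_open_def by blast
  ultimately have "compactin X ((topspace X - A1) \<inter> A2)" "openin X (A2 - A1)"
    using A2 closed_Int_compactin[of X "topspace X - A1" A2] openin_diff
    unfolding compact_open_def by auto
  moreover have "(topspace X - A1) \<inter> A2 = A2 - A1"
    using A2 openin_subset unfolding compact_open_def by blast
  ultimately have D: "compact_open X (A2 - A1)" unfolding compact_open_def by simp
  define C2' where "C2' = C2 \<inter> (p -` (A2 - A1) \<inter> topspace E)"
  have C2': "compact_open E C2' \<and> local_section E p C2'"
    unfolding C2'_def by (rule restr_in[OF hX cont C2(1) D])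
  have C2E: "C2 \<subseteq> topspace E" using C2 openin_subset unfolding compact_open_def by blast
  have pC2': "p ` C2' = A2 - A1"
    unfolding C2'_def by (rule restr_img[OF C2E]) (use C2 in auto)
  have "compact_open E (C1 \<union> C2')"
    using C1 C2' compactin_Un unfolding compact_open_def by blast
  moreover have "inj_on p (C1 \<union> C2')"
    unfolding inj_on_Un using C1 C2' pC2' unfolding local_section_def
    by (auto intro: inj_on_subset)
  moreover have "openin E (C1 \<union> C2')" using C1 C2' unfolding compact_open_def by blast
  ultimately show ?thesis using C1 pC2'
    by (intro exI[of _ "C1 \<union> C2'"]) (auto simp: local_section_def)
qed

lemma global_sec:
  assumes et: "etale_space E p X" and bX: "boolean_space X"
    and A: "compact_open X A"
  shows "\<exists>C. compact_open E C \<and> local_section E p C \<and> p ` C = A"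
proof -
  have cont: "continuous_map E X p"
    using et unfolding etale_space_def local_homeomorphism_map_def by blast
  have hX: "Hausdorff_space X" using bX unfolding boolean_space_def by blast
  define HS where "HS V \<longleftrightarrow> (\<exists>C. compact_open E C \<and> local_section E p C \<and> p ` C = V)" for V
  define \<U> where "\<U> = {V. compact_open X V \<and> V \<subseteq> A \<and> HS V}"
  have "A \<subseteq> \<Union>\<U>"
    using has_sec_local[OF et bX A] unfolding \<U>_def HS_def by blast
  then obtain F where F: "finite F" "F \<subseteq> \<U>" "A \<subseteq> \<Union>F"
    using compactinD[of X A \<U>] A unfolding \<U>_def compact_open_def by blast
  have "\<Union>F \<subseteq> A" using F unfolding \<U>_def by blast
  have "compact_open X (\<Union>F) \<and> HS (\<Union>F)" using F(1,2)
  proof (induction F rule: finite_induct)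
    case empty
    then show ?case unfolding HS_def compact_open_def local_section_def by auto
  next
    case (insert V F)
    then have V: "compact_open X V" "HS V" and IH: "compact_open X (\<Union>F)" "HS (\<Union>F)"
      unfolding \<U>_def by auto
    have "HS (V \<union> \<Union>F)" using sec_union[OF hX cont V(1) IH(1)] V(2) IH(2)
      unfolding HS_def by metis
    moreover have "compact_open X (V \<union> \<Union>F)"
      using V IH compactin_Un unfolding compact_open_def by blast
    ultimately show ?case by simp
  qed
  moreover have "\<Union>F = A" using F \<open>\<Union>F \<subseteq> A\<close> by blast
  ultimately show ?thesis unfolding HS_def by simp
qed

lemma inj_restr_eq:
  assumes "inj_on p Z" "Y \<subseteq> Z" "Y \<subseteq> T"
  shows "Z \<inter> (p -` (p ` Y) \<inter> T) = Y"
  using assms unfolding inj_on_def by blast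

lemma B_diff:
  assumes hX: "Hausdorff_space X" and A1: "compact_open X A1" and A2: "compact_open X A2"
  shows "compact_open X (A2 - A1)"
proof -
  have "closedin X A1" using hX A1 compactin_imp_closedin unfolding compact_open_def by blast
  moreover have "closedin X (topspace X - A1)"
    using A1 unfolding compact_open_def by blast
  ultimately have "compactin X ((topspace X - A1) \<inter> A2)" "openin X (A2 - A1)"
    using A2 closed_Int_compactin[of X "topspace X - A1" A2] openin_diff
    unfolding compact_open_def by auto
  moreover have "(topspace X - A1) \<inter> A2 = A2 - A1"
    using A2 openin_subset unfolding compact_open_def by blast
  ultimately show ?thesis unfolding compact_open_def by simp
qed

theorem proposition3p1:
  fixes E :: "'a topology" and X :: "'b topology" and p :: "'a \<Rightarrow> 'b"
  assumes "etale_space E p X"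
    and "boolean_space X"
  shows "boolean_set (\<subseteq>) {A. compact_open X A}
           {C. compact_open E C \<and> local_section E p C}
           (\<lambda>C. p ` C)
           (\<lambda>A B C. C \<inter> (p -` B \<inter> topspace E))"
proof -
  note et = assms(1) and bX = assms(2)
  have cont: "continuous_map E X p"
    using et unfolding etale_space_def local_homeomorphism_map_def by blast
  have hX: "Hausdorff_space X" using bX unfolding boolean_space_def by blast
  define B where "B = {A. compact_open X A}"
  define S where "S = {C. compact_open E C \<and> local_section E p C}"
  define res where "res = (\<lambda>(A::'b set) (B::'b set) C. C \<inter> (p -` B \<inter> topspace E))"
  define P where "P = (\<lambda>C. p ` C)"
  have Bint: "a \<inter> b \<in> B" if "a \<in> B" "b \<in> B" for a b
    using that compactin_Int[OF hX] unfolding B_def compact_open_def by auto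
  have Bun: "a \<union> b \<in> B" if "a \<in> B" "b \<in> B" for a b
    using that compactin_Un unfolding B_def compact_open_def by auto
  have Bdiff: "b - a \<in> B" if "a \<in> B" "b \<in> B" for a b
    using that B_diff[OF hX] unfolding B_def by auto
  have Bempty: "{} \<in> B" unfolding B_def compact_open_def by auto
  have binf: "binf (\<subseteq>) B a b = a \<inter> b" if "a \<in> B" "b \<in> B" for a b
    using binf_eqI[OF Bint that] by blast
  have bsup: "bsup (\<subseteq>) B a b = a \<union> b" if "a \<in> B" "b \<in> B" for a b
    using bsup_eqI[OF Bun that] by blast
  have po: "partial_order_on_set (\<subseteq>) B" unfolding partial_order_on_set_def by auto
  have infs: "\<forall>a\<in>B. \<forall>b\<in>B. \<exists>m. is_inf (\<subseteq>) B a b m"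
    using Bint unfolding is_inf_def by blast
  have sups: "\<forall>a\<in>B. \<forall>b\<in>B. \<exists>j. is_sup (\<subseteq>) B a b j"
    using Bun unfolding is_sup_def by blast
  have gba: "gen_boolean_algebra (\<subseteq>) B"
    unfolding gen_boolean_algebra_def
  proof (intro conjI po infs sups ballI impI)
    show "\<exists>z\<in>B. \<forall>a\<in>B. z \<subseteq> a" using Bempty by blast
  next
    fix a b c assume abc: "a \<in> B" "b \<in> B" "c \<in> B"
    show "binf (\<subseteq>) B a (bsup (\<subseteq>) B b c) = bsup (\<subseteq>) B (binf (\<subseteq>) B a b) (binf (\<subseteq>) B a c)"
      using abc by (simp add: binf bsup Bint Bun Int_Un_distrib)
  next
    fix a x b assume axb: "a \<in> B" "x \<in> B" "b \<in> B" "a \<subseteq> x \<and> x \<subseteq> b"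
    have y: "a \<union> (b - x) \<in> B" using axb Bun Bdiff by blast
    show "\<exists>y\<in>B. binf (\<subseteq>) B x y = a \<and> bsup (\<subseteq>) B x y = b"
      using axb y by (intro bexI[of _ "a \<union> (b - x)"]) (auto simp: binf bsup)
  qed
  have SE: "C \<subseteq> topspace E" if "C \<in> S" for C
    using that openin_subset unfolding S_def compact_open_def local_section_def by blast
  have PB: "P C \<in> B" if "C \<in> S" for C
  proof -
    from that have c: "openin E C" "compactin E C" unfolding S_def compact_open_def by auto
    show ?thesis unfolding B_def P_def compact_open_def
      using etale_open_image[OF et c(1)] image_compactin[OF c(2) cont] by simp
  qed
  have resS: "res e f C \<in> S" if "C \<in> S" "f \<in> B" for e f C
    using restr_in[OF hX cont, of C f] that unfolding S_def B_def res_def by blast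
  have resP: "P (res e f C) = f" if "C \<in> S" "f \<subseteq> P C" for e f C
    using restr_img[OF SE[OF that(1)] that(2)[unfolded P_def]] unfolding res_def P_def by simp
  have ps: "presheaf (\<subseteq>) B S P res"
    unfolding presheaf_def meet_semilattice_def
  proof (intro conjI po infs ballI impI allI)
    fix x assume "x \<in> S" then show "P x \<in> B" by (rule PB)
  next
    fix e f x assume "e \<in> B" "f \<in> B" "x \<in> S" "f \<subseteq> e \<and> P x = e"
    then show "res e f x \<in> S" "P (res e f x) = f" using resS resP by auto
  next
    fix x assume "x \<in> S" then show "res (P x) (P x) x = x"
      using SE unfolding res_def P_def by auto
  next
    fix e f g x assume "e \<in> B" "f \<in> B" "g \<in> B" "x \<in> S" "g \<subseteq> f \<and> f \<subseteq> e \<and> P x = e"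
    then show "res f g (res e f x) = res e g x" unfolding res_def by auto
  qed
  have gs: "global_support B S P"
    unfolding global_support_def using global_sec[OF et bX]
    unfolding B_def S_def P_def by blast
  have emptyS: "{} \<in> S" unfolding S_def compact_open_def local_section_def by auto
  have bot: "\<exists>z\<in>S. (\<forall>x\<in>S. presheaf_le (\<subseteq>) P res z x) \<and>
            (\<forall>x\<in>S. P x = bbot (\<subseteq>) B \<longrightarrow> x = z)"
    using emptyS bbot_eqI[OF Bempty]
    unfolding presheaf_le_def res_def P_def by (intro bexI[of _ "{}"]) auto
  have joins: "\<exists>j. is_sup (presheaf_le (\<subseteq>) P res) S x y j"
    if xy: "x \<in> S" "y \<in> S" "presheaf_compatible (\<subseteq>) B S P res x y" for x y
  proof -
    obtain m where m: "is_inf (presheaf_le (\<subseteq>) P res) S x y m" "P m = binf (\<subseteq>) B (P x) (P y)"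
      using xy(3) unfolding presheaf_compatible_def by blast
    have pm: "P m = P x \<inter> P y" using m(2) binf PB xy(1,2) by simp
    have mS: "m \<in> S" and lmx: "presheaf_le (\<subseteq>) P res m x" and lmy: "presheaf_le (\<subseteq>) P res m y"
      using m(1) unfolding is_inf_def by simp_all
    have mx: "m = res (P x) (P m) x" using lmx unfolding presheaf_le_def by (rule conjunct2)
    have my: "m = res (P y) (P m) y" using lmy unfolding presheaf_le_def by (rule conjunct2)
    have injm: "inj_on p m" using mS unfolding S_def local_section_def by blast
    have injx: "inj_on p x" "inj_on p y" using xy(1,2) unfolding S_def local_section_def by auto
    have inj: "inj_on p (x \<union> y)"
    proof (rule inj_onI)
      fix a b assume ab: "a \<in> x \<union> y" "b \<in> x \<union> y" "p a = p b"
      have memm: "c \<in> m" if "c \<in> x" "p c \<in> P y" for c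
      proof -
        have "c \<in> topspace E" using that(1) SE[OF xy(1)] by blast
        then have "c \<in> res (P x) (P m) x" using that unfolding res_def pm by (auto simp: P_def)
        then show ?thesis using mx by metis
      qed
      have memm2: "c \<in> m" if "c \<in> y" "p c \<in> P x" for c
      proof -
        have "c \<in> topspace E" using that(1) SE[OF xy(2)] by blast
        then have "c \<in> res (P y) (P m) y" using that unfolding res_def pm by (auto simp: P_def)
        then show ?thesis using my by metis
      qed
      show "a = b"
      proof (cases "a \<in> x")
        case True
        show ?thesis
        proof (cases "b \<in> x")
          case True
          then show ?thesis using \<open>a \<in> x\<close> ab(3) injx(1) by (simp add: inj_on_eq_iff)
        next
          case False
          then have b: "b \<in> y" using ab(2) by blast
          have "a \<in> m" using memm[OF True] ab(3) b unfolding P_def by (metis imageI)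
          moreover have "b \<in> m" using memm2[OF b] ab(3) True unfolding P_def by (metis imageI)
          ultimately show ?thesis using ab(3) injm by (simp add: inj_on_eq_iff)
        qed
      next
        case False
        then have a: "a \<in> y" using ab(1) by blast
        show ?thesis
        proof (cases "b \<in> y")
          case True
          then show ?thesis using a ab(3) injx(2) by (simp add: inj_on_eq_iff)
        next
          case False
          then have b: "b \<in> x" using ab(2) by blast
          have "a \<in> m" using memm2[OF a] ab(3) b unfolding P_def by (metis imageI)
          moreover have "b \<in> m" using memm[OF b] ab(3) a unfolding P_def by (metis imageI)
          ultimately show ?thesis using ab(3) injm by (simp add: inj_on_eq_iff)
        qed
      qed
    qed
    have jS: "x \<union> y \<in> S"
      using xy(1,2) inj compactin_Un unfolding S_def compact_open_def local_section_def by blast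
    have xT: "x \<subseteq> topspace E" "y \<subseteq> topspace E" using SE xy(1,2) by auto
    have e1: "(x \<union> y) \<inter> (p -` (p ` x) \<inter> topspace E) = x"
      by (rule inj_restr_eq[OF inj]) (use xT in auto)
    have e2: "(x \<union> y) \<inter> (p -` (p ` y) \<inter> topspace E) = y"
      by (rule inj_restr_eq[OF inj]) (use xT in auto)
    have lx: "presheaf_le (\<subseteq>) P res x (x \<union> y)" "presheaf_le (\<subseteq>) P res y (x \<union> y)"
      unfolding presheaf_le_def res_def P_def using e1 e2 by auto
    have least: "presheaf_le (\<subseteq>) P res (x \<union> y) z"
      if z: "z \<in> S" "presheaf_le (\<subseteq>) P res x z" "presheaf_le (\<subseteq>) P res y z" for z
    proof -
      have zx: "x = res (P z) (P x) z" using z(2) unfolding presheaf_le_def by (rule conjunct2)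
      have zy: "y = res (P z) (P y) z" using z(3) unfolding presheaf_le_def by (rule conjunct2)
      have "res (P z) (P x) z \<subseteq> z" "res (P z) (P y) z \<subseteq> z" unfolding res_def by auto
      then have sub: "x \<union> y \<subseteq> z" using zx zy by (metis Un_least)
      have "inj_on p z" using z(1) unfolding S_def local_section_def by blast
      then have e3: "z \<inter> (p -` (p ` (x \<union> y)) \<inter> topspace E) = x \<union> y"
        by (rule inj_restr_eq) (use sub xT in auto)
      have "p ` (x \<union> y) \<subseteq> p ` z" using sub by (rule image_mono)
      then show ?thesis unfolding presheaf_le_def res_def P_def using e3 by simp
    qed
    show ?thesis using jS lx least unfolding is_sup_def by blast
  qed
  have "boolean_set (\<subseteq>) B S P res"
    unfolding boolean_set_def using gba ps gs bot joins by blast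
  then show ?thesis unfolding B_def S_def P_def res_def .
qed

end
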